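(* Let $\Omega\subset\mathbb{R}^d$ be a convex polygonal domain, $\mathrm{Wi}>0$, and let $\vec u:\Omega\times[0,T]\to\mathbb{R}^d$ be a given, sufficiently smooth velocity field with $\vec u\cdot\vec n=0$ on $\partial\Omega$, and $\Delta t=T/N$ with $\Delta t\,\|\vec u\|_{C^0([0,T];W^{1,\infty}(\Omega))}<1$; write $t^n=n\Delta t$. Let $\boldsymbol\sigma$ be a sufficiently smooth solution of the Oldroyd-B constitutive law $$\partial_t\boldsymbol\sigma+(\vec u\cdot\nabla)\boldsymbol\sigma-(\nabla\vec u)\boldsymbol\sigma-\boldsymbol\sigma(\nabla\vec u)^T=-\tfrac{1}{\mathrm{Wi}}(\boldsymbol\sigma-\vec I).$$ For $t\in[\Delta t,T]$ set $\vec y^t_{\Delta t}(\vec x)=\vec x-\Delta t\,\vec u(\vec x,t)$, $\vec F^t_{\Delta t}(\vec x)=\vec I+\Delta t\,\nabla\vec u(\vec x,t)$, and for a tensor field $\vec\zeta$ define $$D_{(\vec u,\Delta t)}\vec\zeta(\vec x,t)=\tfrac{1}{\Delta t}\big(\vec\zeta(\vec x,t)-\vec F^t_{\Delta t}(\vec x)\,\vec\zeta(\vec y^t_{\Delta t}(\vec x),t-\Delta t)\,\vec F^t_{\Delta t}(\vec x)^T\big).$$ Consider the semidiscrete scheme: $\vec\Sigma^0=\boldsymbol\sigma^0$ and, for $n\ge1$ (with $t=t^n$), $$\tfrac{1}{\Delta t}\big(\vec\Sigma^n(\vec x)-\vec F^{t}_{\Delta t}(\vec x)\vec\Sigma^{n-1}(\vec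 y^{t}_{\Delta t}(\vec x))\vec F^{t}_{\Delta t}(\vec x)^T\big)=-\tfrac{1}{\mathrm{Wi}}(\vec\Sigma^n(\vec x)-\vec I).$$ Then this semidiscrete scheme is a consistent, first order approximation, in the sense that its local truncation error is $\mathcal{O}(\Delta t^2)$: if one step of the scheme is performed at time $t=t^n$ starting from the exact value $\boldsymbol\sigma(\cdot,t-\Delta t)$ in place of $\vec\Sigma^{n-1}$, the resulting $\vec\Sigma^n$ satisfies $\boldsymbol\sigma(\vec x,t)-\vec\Sigma^n(\vec x)=\mathcal{O}(\Delta t^2)$.
   Context: $(\nabla\vec u)_{ij}=\partial u_i/\partial x_j$; $\vec I$ is the identity tensor; $\mathrm{Wi}$ is the Weissenberg number. *)

theory Defs
  imports "HOL-Analysis.Analysis"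
begin

definition C2_on :: "'a::euclidean_space set \<Rightarrow> ('a \<Rightarrow> 'b::euclidean_space) \<Rightarrow> bool" where
  "C2_on U f \<longleftrightarrow>
     (\<exists>f' f''. (\<forall>z\<in>U. (f has_derivative blinfun_apply (f' z)) (at z)) \<and>
               (\<forall>z\<in>U. (f' has_derivative blinfun_apply (f'' z)) (at z)) \<and>
               continuous_on U f'')"

definition grad_u :: "(real^'d \<Rightarrow> real \<Rightarrow> real^'d) \<Rightarrow> real^'d \<Rightarrow> real \<Rightarrow> real^'d^'d" where
  "grad_u u x t = (\<chi> i j. vector_derivative (\<lambda>s. u (x + s *\<^sub>R axis j 1) t $ i) (at 0))"

definition dt_tensor :: "(real^'d \<Rightarrow> real \<Rightarrow> real^'d^'d) \<Rightarrow> real^'d \<Rightarrow> real \<Rightarrow> real^'d^'d" where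
  "dt_tensor \<sigma> x t = vector_derivative (\<lambda>s. \<sigma> x s) (at t)"

definition conv_tensor :: "(real^'d \<Rightarrow> real \<Rightarrow> real^'d) \<Rightarrow> (real^'d \<Rightarrow> real \<Rightarrow> real^'d^'d)
     \<Rightarrow> real^'d \<Rightarrow> real \<Rightarrow> real^'d^'d" where
  "conv_tensor u \<sigma> x t =
     (\<Sum>j\<in>UNIV. (u x t $ j) *\<^sub>R vector_derivative (\<lambda>s. \<sigma> (x + s *\<^sub>R axis j 1) t) (at 0))"

text \<open>Norm of u in C^0([0,T]; W^{1,infinity}(Omega)): sup over t of
  max(sup_x |u|, sup_x |grad u|) (Euclidean / Frobenius pointwise norms).\<close>
definition norm_C0W1inf :: "(real^'d) set \<Rightarrow> real \<Rightarrow> (real^'d \<Rightarrow> real \<Rightarrow> real^'d) \<Rightarrow> real" where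
  "norm_C0W1inf \<Omega> T u =
     (SUP t\<in>{0..T}. max (SUP x\<in>\<Omega>. norm (u x t)) (SUP x\<in>\<Omega>. norm (grad_u u x t)))"

end

theory Submission
  imports Defs
begin

lemma invariance:
  fixes P :: "'a::euclidean_space set" and v :: "'a \<Rightarrow> 'a"
  assumes poly: "polytope P" and int: "interior P \<noteq> {}"
    and tang: "\<And>F a b. F facet_of P \<Longrightarrow> a \<noteq> 0 \<Longrightarrow> P \<subseteq> {x. a \<bullet> x \<le> b}
                 \<Longrightarrow> F = P \<inter> {x. a \<bullet> x = b} \<Longrightarrow> \<forall>x\<in>F. a \<bullet> v x = 0"
    and cont: "continuous_on P v"
    and lip: "\<And>x y. x \<in> P \<Longrightarrow> y \<in> P \<Longrightarrow> norm (v x - v y) \<le> L * norm (x - y)"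
    and c: "c \<ge> 0" "c * L < 1"
    and x: "x \<in> P"
  shows "x - c *\<^sub>R v x \<in> P"
proof -
  have ph: "polyhedron P" using poly by (simp add: polytope_imp_polyhedron)
  have cpt: "compact P" using poly by (simp add: polytope_imp_compact)
  have aff: "affine hull P = UNIV" using int affine_hull_nonempty_interior by blast
  obtain F where "finite F" and seq: "P = affine hull P \<inter> \<Inter>F"
             and faces: "\<And>h. h \<in> F \<Longrightarrow> \<exists>a b. a \<noteq> 0 \<and> h = {x. a \<bullet> x \<le> b}"
             and min: "\<And>F'. F' \<subset> F \<Longrightarrow> P \<subset> (affine hull P) \<inter> \<Inter>F'"
    using ph by (simp add: polyhedron_Int_affine_minimal) meson
  then obtain a b where ab: "\<And>h. h \<in> F \<Longrightarrow> a h \<noteq> 0 \<and> h = {x. a h \<bullet> x \<le> b h}"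
    by metis
  have PF: "P = \<Inter>F" using seq aff by simp
  have Psub: "P \<subseteq> {x. a h \<bullet> x \<le> b h}" if "h \<in> F" for h
    using PF ab that by blast
  have tg: "a h \<bullet> v z = 0" if "h \<in> F" "z \<in> P" "a h \<bullet> z = b h" for h z
  proof -
    have fac: "(P \<inter> {x. a h \<bullet> x = b h}) facet_of P"
      using facet_of_polyhedron_explicit [OF \<open>finite F\<close> seq ab min] that(1) by blast
    show ?thesis using tang[OF fac _ Psub[OF that(1)] refl] ab that by blast
  qed
  have "a h0 \<bullet> (x - c *\<^sub>R v x) \<le> b h0" if h0: "h0 \<in> F" for h0
  proof -
    define \<alpha> where "\<alpha> = a h0"
    define H where "H z = \<alpha> \<bullet> (z - c *\<^sub>R v z)" for z
    have contH: "continuous_on P H" unfolding H_def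
      by (intro continuous_intros cont)
    obtain zs where zs: "zs \<in> P" and zmax: "\<And>z. z \<in> P \<Longrightarrow> H z \<le> H zs"
      using compact_attains_sup[OF compact_continuous_image[OF contH cpt]] x by auto
    define I where "I = {h\<in>F. a h \<bullet> zs = b h}"
    obtain yv w where yv: "yv \<in> span (a ` I)" and wo: "\<And>q. q \<in> span (a ` I) \<Longrightarrow> orthogonal w q"
      and dec: "\<alpha> = yv + w"
      using orthogonal_subspace_decomp_exists by blast
    have vperp: "orthogonal (v z) q" if "z \<in> P" "\<And>h. h \<in> I \<Longrightarrow> a h \<bullet> z = b h"
         "q \<in> span (a ` I)" for z q
      by (rule orthogonal_to_span[OF that(3)])
         (use that tg in \<open>auto simp: I_def orthogonal_def inner_commute\<close>)
    have "H zs \<le> b h0"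
    proof (cases "w = 0")
      case True
      then have "\<alpha> \<in> span (a ` I)" using dec yv by simp
      then have "orthogonal (v zs) \<alpha>" using vperp[OF zs] by (auto simp: I_def)
      then have "H zs = \<alpha> \<bullet> zs"
        by (simp add: H_def orthogonal_def inner_diff_right inner_commute)
      also have "\<dots> \<le> b h0" using Psub[OF h0] zs by (auto simp: \<alpha>_def)
      finally show ?thesis .
    next
      case False
      have "\<forall>\<^sub>F s in at_right (0::real). \<forall>h\<in>F - I. a h \<bullet> (zs + s *\<^sub>R w) < b h"
      proof (rule eventually_ball_finite)
        show "finite (F - I)" using \<open>finite F\<close> by simp
        show "\<forall>h\<in>F - I. \<forall>\<^sub>F s in at_right 0. a h \<bullet> (zs + s *\<^sub>R w) < b h"
        proof
          fix h assume h: "h \<in> F - I"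
          have lt: "a h \<bullet> zs < b h" using h Psub zs by (force simp: I_def)
          have "((\<lambda>s. a h \<bullet> (zs + s *\<^sub>R w)) \<longlongrightarrow> a h \<bullet> (zs + 0 *\<^sub>R w)) (at_right 0)"
            by (intro tendsto_intros)
          then show "\<forall>\<^sub>F s in at_right 0. a h \<bullet> (zs + s *\<^sub>R w) < b h"
            using lt by (auto dest: order_tendstoD)
        qed
      qed
      moreover have "\<forall>\<^sub>F s in at_right (0::real). s > 0" by (simp add: eventually_at_right_less)
      ultimately have "\<forall>\<^sub>F s in at_right (0::real). s > 0 \<and> (\<forall>h\<in>F - I. a h \<bullet> (zs + s *\<^sub>R w) < b h)"
        by (simp add: eventually_conj)
      then have "\<exists>s. s > 0 \<and> (\<forall>h\<in>F - I. a h \<bullet> (zs + s *\<^sub>R w) < b h)"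
        by (rule eventually_happens'[rotated]) simp
      then obtain s where s: "s > 0" and sF: "\<forall>h\<in>F - I. a h \<bullet> (zs + s *\<^sub>R w) < b h"
        by blast
      define p where "p = zs + s *\<^sub>R w"
      have wI: "a h \<bullet> w = 0" if "h \<in> I" for h
        using wo[of "a h"] that by (simp add: orthogonal_def span_base inner_commute)
      have pI: "a h \<bullet> p = b h" if "h \<in> I" for h
        using wI[OF that] that by (simp add: p_def I_def inner_add_right)
      have p: "p \<in> P"
      proof -
        have "p \<in> h" if "h \<in> F" for h
        proof (cases "h \<in> I")
          case True then show ?thesis using pI ab that by force
        next
          case False then show ?thesis using sF ab that by (force simp: p_def)
        qed
        then show ?thesis using PF by blast
      qed
      define d where "d = v p - v zs"
      have "orthogonal d yv"
        using vperp[OF p pI yv] vperp[OF zs _ yv] by (simp add: d_def orthogonal_def inner_diff_left I_def)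
      then have ad: "\<alpha> \<bullet> d = w \<bullet> d" unfolding dec orthogonal_def inner_add_left by (simp add: inner_commute)
      have "orthogonal w yv" using wo[OF yv] .
      then have aw: "\<alpha> \<bullet> w = w \<bullet> w" unfolding dec orthogonal_def inner_add_left by (simp add: inner_commute)
      have nd: "norm d \<le> L * (s * norm w)"
        using lip[OF p zs] s by (simp add: d_def p_def)
      have "w \<bullet> d \<le> norm w * norm d" by (rule norm_cauchy_schwarz)
      also have "\<dots> \<le> norm w * (L * (s * norm w))" using nd by (simp add: mult_left_mono)
      finally have "w \<bullet> d \<le> L * s * (norm w)^2" by (simp add: power2_eq_square mult_ac)
      then have wd: "c * (w \<bullet> d) \<le> c * (L * s * (norm w)^2)"
        using c(1) by (rule mult_left_mono)
      have "H p - H zs = \<alpha> \<bullet> (p - zs) - c * (\<alpha> \<bullet> d)"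
        unfolding H_def d_def by (simp add: inner_diff_right algebra_simps)
      also have "\<dots> = s * (w \<bullet> w) - c * (w \<bullet> d)"
        using ad aw by (simp add: p_def)
      also have "\<dots> \<ge> s * (norm w)^2 - c * L * s * (norm w)^2"
        using wd by (simp add: power2_norm_eq_inner mult_ac)
      finally have "H p - H zs \<ge> s * (norm w)^2 * (1 - c * L)" by (simp add: algebra_simps)
      moreover have "s * (norm w)^2 * (1 - c * L) > 0" using s False c(2) by simp
      ultimately have "H p > H zs" by linarith
      with zmax[OF p] show ?thesis by simp
    qed
    moreover have "H x \<le> H zs" using zmax x by simp
    ultimately show ?thesis by (simp add: H_def \<alpha>_def)
  qed
  then show ?thesis using PF ab by blast
qed

lemma norm_mat_vec_le:
  fixes A :: "real^'n^'m"
  shows "norm (A *v x) \<le> norm A * norm x"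
proof -
  have "norm (A *v x) = L2_set (\<lambda>i. \<bar>(A *v x) $ i\<bar>) UNIV" by (simp add: norm_vec_def)
  also have "\<dots> \<le> L2_set (\<lambda>i. norm (A $ i) * norm x) UNIV"
    by (rule L2_set_mono)
       (auto simp: matrix_vector_mul_component intro: Cauchy_Schwarz_ineq2[simplified real_norm_def])
  also have "\<dots> = norm A * norm x"
    using L2_set_left_distrib[of "norm x" "\<lambda>i. norm (A $ i)" UNIV] by (simp add: norm_vec_def)
  finally show ?thesis .
qed

lemma norm_mat_sq:
  fixes A :: "real^'n^'m"
  shows "(norm A)^2 = (\<Sum>i\<in>UNIV. \<Sum>j\<in>UNIV. (A $ i $ j)^2)"
  by (simp add: norm_vec_def L2_set_def sum_nonneg)

lemma norm_transpose: "norm (transpose (A :: real^'n^'m)) = norm A"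
proof -
  have "(norm (transpose A))^2 = (norm A)^2"
    unfolding norm_mat_sq transpose_def by (simp add: sum.swap[of "\<lambda>i j. (A $ j $ i)^2"])
  then show ?thesis by (simp add: power2_eq_iff_nonneg)
qed

lemma row_mult: "((A::real^'n^'m) ** B) $ i = transpose B *v (A $ i)"
  by (simp add: vec_eq_iff matrix_matrix_mult_def matrix_vector_mult_def transpose_def mult.commute)

lemma norm_mat_mult_le:
  fixes A :: "real^'n^'m" and B :: "real^'k^'n"
  shows "norm (A ** B) \<le> norm A * norm B"
proof -
  have "norm (A ** B) = L2_set (\<lambda>i. norm ((A ** B) $ i)) UNIV" by (simp add: norm_vec_def)
  also have "\<dots> \<le> L2_set (\<lambda>i. norm B * norm (A $ i)) UNIV"
  proof (rule L2_set_mono)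
    fix i show "norm ((A ** B) $ i) \<le> norm B * norm (A $ i)"
      unfolding row_mult using norm_mat_vec_le[of "transpose B" "A $ i"] by (simp add: norm_transpose)
  qed simp
  also have "\<dots> = norm A * norm B"
    using L2_set_right_distrib[of "norm B" "\<lambda>i. norm (A $ i)" UNIV] by (simp add: norm_vec_def mult.commute)
  finally show ?thesis .
qed

lemma vd_line:
  assumes "(g has_derivative D) (at (p + s0 *\<^sub>R v))"
  shows "vector_derivative (\<lambda>s. g (p + s *\<^sub>R v)) (at s0) = D v"
proof -
  have "((\<lambda>s. p + s *\<^sub>R v) has_derivative (\<lambda>h. h *\<^sub>R v)) (at s0)"
    by (auto intro!: derivative_eq_intros)
  from has_derivative_compose[OF this assms]
  have "((\<lambda>s. g (p + s *\<^sub>R v)) has_derivative (\<lambda>h. D (h *\<^sub>R v))) (at s0)" .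
  moreover have "linear D" using assms has_derivative_linear by blast
  ultimately have "((\<lambda>s. g (p + s *\<^sub>R v)) has_derivative (\<lambda>h. h *\<^sub>R D v)) (at s0)"
    by (simp add: linear_scale)
  then have "((\<lambda>s. g (p + s *\<^sub>R v)) has_vector_derivative D v) (at s0)"
    by (simp add: has_vector_derivative_def)
  then show ?thesis by (rule vector_derivative_at)
qed

lemma taylor2:
  fixes f :: "'a::real_normed_vector \<Rightarrow> 'b::real_normed_vector"
  assumes seg: "\<And>s. s \<in> {0..h} \<Longrightarrow> p + s *\<^sub>R v \<in> U"
    and fD: "\<And>z. z \<in> U \<Longrightarrow> (f has_derivative blinfun_apply (D z)) (at z)"
    and DD: "\<And>z. z \<in> U \<Longrightarrow> (D has_derivative blinfun_apply (DD z)) (at z)"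
    and M: "\<And>s. s \<in> {0..h} \<Longrightarrow> norm (DD (p + s *\<^sub>R v)) \<le> M"
    and h: "h \<ge> 0"
  shows "norm (f (p + h *\<^sub>R v) - f p - h *\<^sub>R blinfun_apply (D p) v) \<le> M * (norm v)^2 * h^2"
proof -
  define \<gamma> where "\<gamma> s = p + s *\<^sub>R v" for s :: real
  define ch where "ch s = blinfun_apply (D (\<gamma> s)) v" for s
  have gder: "(\<gamma> has_derivative (\<lambda>k. k *\<^sub>R v)) (at s within {0..h})" for s
    unfolding \<gamma>_def by (auto intro!: derivative_eq_intros)
  have M0: "M \<ge> 0" using M[of 0] h by (auto intro: order_trans[OF norm_ge_zero])
  have chider: "(ch has_derivative (\<lambda>k. blinfun_apply (blinfun_apply (DD (\<gamma> s)) (k *\<^sub>R v)) v)) (at s within {0..h})"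
    if s: "s \<in> {0..h}" for s
  proof -
    have "((\<lambda>s. D (\<gamma> s)) has_derivative (\<lambda>k. blinfun_apply (DD (\<gamma> s)) (k *\<^sub>R v))) (at s within {0..h})"
      using has_derivative_compose[OF gder DD[OF seg[OF s, folded \<gamma>_def]]] .
    from blinfun.FDERIV[OF this has_derivative_const[of v]]
    show ?thesis unfolding ch_def by simp
  qed
  have chib: "norm (ch s - ch 0) \<le> M * (norm v)^2 * s" if s: "s \<in> {0..h}" for s
  proof -
    have "norm (ch s - ch 0) \<le> (M * (norm v)^2) * norm (s - 0)"
    proof (rule differentiable_bound[of "{0..h}"])
      show "convex {0..h}" by simp
      show "\<And>x. x \<in> {0..h} \<Longrightarrow> (ch has_derivative (\<lambda>k. blinfun_apply (blinfun_apply (DD (\<gamma> x)) (k *\<^sub>R v)) v)) (at x within {0..h})"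
        by (rule chider)
      show "onorm (\<lambda>k. blinfun_apply (blinfun_apply (DD (\<gamma> x)) (k *\<^sub>R v)) v) \<le> M * (norm v)^2"
        if x: "x \<in> {0..h}" for x
      proof (rule onorm_le)
        fix k :: real
        have "norm (blinfun_apply (blinfun_apply (DD (\<gamma> x)) (k *\<^sub>R v)) v)
              \<le> norm (blinfun_apply (DD (\<gamma> x)) (k *\<^sub>R v)) * norm v" by (rule norm_blinfun)
        also have "\<dots> \<le> (norm (DD (\<gamma> x)) * norm (k *\<^sub>R v)) * norm v"
          by (rule mult_right_mono[OF norm_blinfun]) simp
        also have "\<dots> \<le> (M * norm (k *\<^sub>R v)) * norm v"
          using M[OF x] by (auto intro!: mult_right_mono simp: \<gamma>_def)
        finally show "norm (blinfun_apply (blinfun_apply (DD (\<gamma> x)) (k *\<^sub>R v)) v) \<le> M * (norm v)^2 * norm k"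
          by (simp add: power2_eq_square mult_ac)
      qed
      show "s \<in> {0..h}" by (rule s)
      show "0 \<in> {0..h}" using h by simp
    qed
    then show ?thesis using s by simp
  qed
  define \<psi> where "\<psi> s = f (\<gamma> s) - s *\<^sub>R ch 0" for s
  have psider: "(\<psi> has_derivative (\<lambda>k. k *\<^sub>R (ch s - ch 0))) (at s within {0..h})"
    if s: "s \<in> {0..h}" for s
  proof -
    have "((\<lambda>s. f (\<gamma> s)) has_derivative (\<lambda>k. blinfun_apply (D (\<gamma> s)) (k *\<^sub>R v))) (at s within {0..h})"
      using has_derivative_compose[OF gder fD[OF seg[OF s, folded \<gamma>_def]]] .
    then have "(\<psi> has_derivative (\<lambda>k. blinfun_apply (D (\<gamma> s)) (k *\<^sub>R v) - k *\<^sub>R ch 0)) (at s within {0..h})"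
      unfolding \<psi>_def by (auto intro!: derivative_eq_intros)
    then show ?thesis
      by (simp add: ch_def blinfun.scaleR_right scaleR_diff_right)
  qed
  have "norm (\<psi> h - \<psi> 0) \<le> (M * (norm v)^2 * h) * norm (h - 0)"
  proof (rule differentiable_bound[of "{0..h}"])
    show "convex {0..h}" by simp
    show "\<And>x. x \<in> {0..h} \<Longrightarrow> (\<psi> has_derivative (\<lambda>k. k *\<^sub>R (ch x - ch 0))) (at x within {0..h})"
      by (rule psider)
    show "onorm (\<lambda>k. k *\<^sub>R (ch x - ch 0)) \<le> M * (norm v)^2 * h" if x: "x \<in> {0..h}" for x
    proof (rule onorm_le)
      fix k :: real
      have "norm (ch x - ch 0) \<le> M * (norm v)^2 * h"
      proof -
        have "M * (norm v)^2 * x \<le> M * (norm v)^2 * h"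
          using x M0 by (intro mult_left_mono) auto
        then show ?thesis using chib[OF x] by linarith
      qed
      then show "norm (k *\<^sub>R (ch x - ch 0)) \<le> M * (norm v)^2 * h * norm k"
        by (simp add: mult_left_mono mult.commute)
    qed
    show "h \<in> {0..h}" using h by simp
    show "0 \<in> {0..h}" using h by simp
  qed
  moreover have "f (p + h *\<^sub>R v) - f p - h *\<^sub>R blinfun_apply (D p) v = \<psi> h - \<psi> 0"
    by (simp add: \<psi>_def \<gamma>_def ch_def algebra_simps)
  ultimately show ?thesis using h
    by (simp add: power2_eq_square mult_ac)
qed

lemma grad_eq:
  assumes "((\<lambda>z. u (fst z) (snd z)) has_derivative blinfun_apply D) (at (x,t))"
  shows "grad_u u x t = matrix (\<lambda>h. blinfun_apply D (h, 0))"
proof -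
  have "vector_derivative (\<lambda>s. u (x + s *\<^sub>R axis j 1) t $ i) (at 0) = blinfun_apply D (axis j 1, 0) $ i" for i j
  proof -
    have d: "((\<lambda>z. u (fst z) (snd z) $ i) has_derivative (\<lambda>h. blinfun_apply D h $ i)) (at ((x,t) + 0 *\<^sub>R (axis j 1, 0)))"
      using bounded_linear.has_derivative[OF bounded_linear_vec_nth assms] by simp
    from vd_line[OF d] show ?thesis by simp
  qed
  then show ?thesis by (simp add: grad_u_def matrix_def)
qed

lemma dt_eq:
  assumes "((\<lambda>z. \<sigma> (fst z) (snd z)) has_derivative blinfun_apply D) (at (x,t))"
  shows "dt_tensor \<sigma> x t = blinfun_apply D (0, 1)"
proof -
  have d: "((\<lambda>z. \<sigma> (fst z) (snd z)) has_derivative blinfun_apply D) (at ((x,0) + t *\<^sub>R (0, 1)))"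
    using assms by simp
  from vd_line[OF d] show ?thesis by (simp add: dt_tensor_def)
qed

lemma conv_eq:
  assumes "((\<lambda>z. \<sigma> (fst z) (snd z)) has_derivative blinfun_apply D) (at (x,t))"
  shows "conv_tensor u \<sigma> x t = blinfun_apply D (u x t, 0)"
proof -
  have vd: "vector_derivative (\<lambda>s. \<sigma> (x + s *\<^sub>R axis j 1) t) (at 0) = blinfun_apply D (axis j 1, 0)" for j
  proof -
    have d: "((\<lambda>z. \<sigma> (fst z) (snd z)) has_derivative blinfun_apply D) (at ((x,t) + 0 *\<^sub>R (axis j 1, 0)))"
      using assms by simp
    from vd_line[OF d] show ?thesis by simp
  qed
  have lin: "linear (\<lambda>h. blinfun_apply D (h, 0))"
    by (intro bounded_linear.linear bounded_linear_compose[OF blinfun.bounded_linear_right])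
       (auto intro: bounded_linear_Pair bounded_linear_ident bounded_linear_zero)
  have "conv_tensor u \<sigma> x t = (\<Sum>j\<in>UNIV. (u x t $ j) *\<^sub>R blinfun_apply D (axis j 1, 0))"
    by (simp add: conv_tensor_def vd)
  also have "\<dots> = blinfun_apply D (\<Sum>j\<in>UNIV. (u x t $ j) *\<^sub>R axis j 1, 0)"
    using linear_sum[OF lin, of "\<lambda>j. (u x t $ j) *\<^sub>R axis j 1" UNIV] linear_scale[OF lin]
    by simp
  also have "(\<Sum>j\<in>UNIV. (u x t $ j) *\<^sub>R axis j 1) = u x t"
    using basis_expansion[of "u x t"] by (simp add: scalar_mult_eq_scaleR)
  finally show ?thesis .
qed

lemma cbound:
  fixes g :: "'a::topological_space \<Rightarrow> 'b::real_normed_vector"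
  assumes "compact K" "continuous_on K g"
  shows "\<exists>M\<ge>0. \<forall>z\<in>K. norm (g z) \<le> M"
proof -
  have "bounded (g ` K)" by (rule compact_imp_bounded[OF compact_continuous_image[OF assms(2,1)]])
  then obtain M where "\<forall>z\<in>K. norm (g z) \<le> M" by (auto simp: bounded_iff)
  then show ?thesis by (intro exI[of _ "max M 0"]) auto
qed

lemma zero_closure:
  fixes \<Phi> :: "'a::topological_space \<Rightarrow> 'b::real_normed_vector"
  assumes U: "open U" and c: "continuous_on U \<Phi>" and z: "\<And>z. z \<in> A \<Longrightarrow> \<Phi> z = 0"
    and p: "p \<in> closure A" "p \<in> U"
  shows "\<Phi> p = 0"
proof (rule ccontr)
  assume np: "\<Phi> p \<noteq> 0"
  let ?V = "\<Phi> -` (- {0}) \<inter> U"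
  have o0: "open (- {0::'b})" by (simp add: open_Compl)
  have oV: "open ?V" using c[unfolded continuous_on_open_vimage[OF U], rule_format, OF o0] .
  have "p \<in> ?V" using np p by simp
  then have "?V \<inter> closure A \<noteq> {}" using p by blast
  then have "?V \<inter> A \<noteq> {}" using open_Int_closure_eq_empty[OF oV] by blast
  then show False using z by auto
qed

lemma cont_mm:
  fixes f :: "'x::topological_space \<Rightarrow> real^'n^'m" and g :: "'x \<Rightarrow> real^'k^'n"
  assumes "continuous_on S f" "continuous_on S g"
  shows "continuous_on S (\<lambda>z. f z ** g z)"
  unfolding matrix_matrix_mult_def by (intro continuous_intros assms)

lemma cont_tr:
  fixes f :: "'x::topological_space \<Rightarrow> real^'n^'m"
  assumes "continuous_on S f"
  shows "continuous_on S (\<lambda>z. transpose (f z))"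
  unfolding transpose_def by (intro continuous_intros assms)

lemma mm_add_r: "((A::real^'n^'m) + B) ** C = A ** C + B ** C"
  by (simp add: matrix_matrix_mult_def vec_eq_iff sum.distrib algebra_simps)
lemma mm_diff_r: "((A::real^'n^'m) - B) ** C = A ** C - B ** C"
  by (simp add: matrix_matrix_mult_def vec_eq_iff sum_subtractf algebra_simps)
lemma mm_diff_l: "(A::real^'n^'m) ** (B - C) = A ** B - A ** C"
  by (simp add: matrix_matrix_mult_def vec_eq_iff sum_subtractf algebra_simps)
lemma mm_scale_l: "(k *\<^sub>R (A::real^'n^'m)) ** B = k *\<^sub>R (A ** B)"
  by (simp add: matrix_matrix_mult_def vec_eq_iff sum_distrib_left algebra_simps)
lemma mm_scale_r: "(A::real^'n^'m) ** (k *\<^sub>R B) = k *\<^sub>R (A ** B)"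
  by (simp add: matrix_matrix_mult_def vec_eq_iff sum_distrib_left algebra_simps)
lemma tr_add: "transpose ((A::real^'n^'m) + B) = transpose A + transpose B"
  by (simp add: transpose_def vec_eq_iff)

lemma FEF:
  fixes G E :: "real^'n^'n"
  shows "(mat 1 + dt *\<^sub>R G) ** E ** transpose (mat 1 + dt *\<^sub>R G)
         = E + dt *\<^sub>R (G ** E + E ** transpose G) + (dt * dt) *\<^sub>R (G ** E ** transpose G)"
proof -
  have t: "transpose (mat 1 + dt *\<^sub>R G) = mat 1 + dt *\<^sub>R transpose G"
    by (simp only: tr_add transpose_scalar transpose_mat)
  have f: "(mat 1 + dt *\<^sub>R G) ** E = E + dt *\<^sub>R (G ** E)"
    by (simp only: mm_add_r mm_scale_l matrix_mul_lid)
  have "(E + dt *\<^sub>R (G ** E)) ** (mat 1 + dt *\<^sub>R transpose G)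
        = E + dt *\<^sub>R (G ** E) + dt *\<^sub>R (E ** transpose G) + (dt * dt) *\<^sub>R (G ** E ** transpose G)"
    by (simp only: matrix_add_ldistrib mm_add_r mm_scale_l mm_scale_r matrix_mul_rid scaleR_scaleR scaleR_add_right add.assoc)
  then show ?thesis unfolding t f by (simp add: scaleR_add_right add.assoc scaleR_scaleR)
qed

theorem proposition2:
  fixes \<Omega> :: "(real^'d) set"
    and u :: "real^'d \<Rightarrow> real \<Rightarrow> real^'d"
    and \<sigma> :: "real^'d \<Rightarrow> real \<Rightarrow> real^'d^'d"
    and T Wi :: real
  assumes dom: "open \<Omega>" "convex \<Omega>" "\<Omega> \<noteq> {}" "polytope (closure \<Omega>)"
    and Wi: "Wi > 0" and T: "T > 0"
    and smooth: "\<exists>U. open U \<and> closure \<Omega> \<times> {0..T} \<subseteq> U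
                   \<and> C2_on U (\<lambda>z. u (fst z) (snd z)) \<and> C2_on U (\<lambda>z. \<sigma> (fst z) (snd z))"
    and tangential: "\<And>F a b t. F facet_of closure \<Omega> \<Longrightarrow> a \<noteq> 0 \<Longrightarrow>
                      closure \<Omega> \<subseteq> {x. a \<bullet> x \<le> b} \<Longrightarrow> F = closure \<Omega> \<inter> {x. a \<bullet> x = b} \<Longrightarrow>
                      t \<in> {0..T} \<Longrightarrow> \<forall>x\<in>F. a \<bullet> u x t = 0"
    and oldroyd: "\<And>x t. x \<in> \<Omega> \<Longrightarrow> t \<in> {0<..<T} \<Longrightarrow>
                   dt_tensor \<sigma> x t + conv_tensor u \<sigma> x t
                   - grad_u u x t ** \<sigma> x t - \<sigma> x t ** transpose (grad_u u x t)
                   = - (1 / Wi) *\<^sub>R (\<sigma> x t - mat 1)"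
  shows "\<exists>C. \<forall>N::nat. \<forall>n::nat. \<forall>x S.
           let \<Delta>t = T / real N; t = real n * \<Delta>t;
               F = mat 1 + \<Delta>t *\<^sub>R grad_u u x t;
               y = x - \<Delta>t *\<^sub>R u x t
           in (N > 0 \<and> \<Delta>t * norm_C0W1inf \<Omega> T u < 1 \<and> 1 \<le> n \<and> n \<le> N \<and> x \<in> \<Omega> \<and>
               (1 / \<Delta>t) *\<^sub>R (S - F ** \<sigma> y (t - \<Delta>t) ** transpose F) = - (1 / Wi) *\<^sub>R (S - mat 1))
              \<longrightarrow> norm (\<sigma> x t - S) \<le> C * \<Delta>t\<^sup>2"
proof -
  obtain U where U: "open U" and KU: "closure \<Omega> \<times> {0..T} \<subseteq> U"
    and C2u: "C2_on U (\<lambda>z. u (fst z) (snd z))" and C2s: "C2_on U (\<lambda>z. \<sigma> (fst z) (snd z))"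
    using smooth by blast
  define uu where "uu = (\<lambda>z. u (fst z) (snd z))"
  define ss where "ss = (\<lambda>z. \<sigma> (fst z) (snd z))"
  obtain uD uDD where
    uD: "\<And>z. z \<in> U \<Longrightarrow> (uu has_derivative blinfun_apply (uD z)) (at z)" and
    uDD: "\<And>z. z \<in> U \<Longrightarrow> (uD has_derivative blinfun_apply (uDD z)) (at z)"
    using C2u unfolding C2_on_def uu_def by blast
  obtain sD sDD where
    sD: "\<And>z. z \<in> U \<Longrightarrow> (ss has_derivative blinfun_apply (sD z)) (at z)" and
    sDD: "\<And>z. z \<in> U \<Longrightarrow> (sD has_derivative blinfun_apply (sDD z)) (at z)" and
    sDDc: "continuous_on U sDD"
    using C2s unfolding C2_on_def ss_def by blast
  define K where "K = closure \<Omega> \<times> {0..T}"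
  have cK: "compact K" unfolding K_def using dom(4) by (intro compact_Times polytope_imp_compact compact_Icc)
  have KU': "K \<subseteq> U" using KU K_def by simp
  have contu: "continuous_on U uu"
    by (rule continuous_at_imp_continuous_on) (use uD has_derivative_continuous in blast)
  have conts: "continuous_on U ss"
    by (rule continuous_at_imp_continuous_on) (use sD has_derivative_continuous in blast)
  have contuD: "continuous_on U uD"
    by (rule continuous_at_imp_continuous_on) (use uDD has_derivative_continuous in blast)
  have contsD: "continuous_on U sD"
    by (rule continuous_at_imp_continuous_on) (use sDD has_derivative_continuous in blast)
  define Gm where "Gm z = matrix (\<lambda>h. blinfun_apply (uD z) (h, 0))" for z
  have contGm: "continuous_on U Gm"
    unfolding Gm_def matrix_def
    by (intro continuous_on_vec_lambda continuous_on_component blinfun.continuous_on[OF contuD] continuous_on_const)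
  obtain Mu where Mu0: "Mu \<ge> 0" and Mu: "\<And>z. z \<in> K \<Longrightarrow> norm (uu z) \<le> Mu"
    using cbound[OF cK continuous_on_subset[OF contu KU']] by blast
  obtain Ms where Ms0: "Ms \<ge> 0" and Ms: "\<And>z. z \<in> K \<Longrightarrow> norm (ss z) \<le> Ms"
    using cbound[OF cK continuous_on_subset[OF conts KU']] by blast
  obtain M1 where M10: "M1 \<ge> 0" and M1: "\<And>z. z \<in> K \<Longrightarrow> norm (sD z) \<le> M1"
    using cbound[OF cK continuous_on_subset[OF contsD KU']] by blast
  obtain M2 where M20: "M2 \<ge> 0" and M2: "\<And>z. z \<in> K \<Longrightarrow> norm (sDD z) \<le> M2"
    using cbound[OF cK continuous_on_subset[OF sDDc KU']] by blast
  obtain Mg where Mg0: "Mg \<ge> 0" and Mg: "\<And>z. z \<in> K \<Longrightarrow> norm (Gm z) \<le> Mg"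
    using cbound[OF cK continuous_on_subset[OF contGm KU']] by blast
  have gradG: "grad_u u x t = Gm (x, t)" if "(x, t) \<in> U" for x t
    unfolding Gm_def using grad_eq[OF uD[OF that, unfolded uu_def]] .
  have GmV: "Gm z *v h = blinfun_apply (uD z) (h, 0)" for z h
  proof -
    have "bounded_linear (\<lambda>h. blinfun_apply (uD z) (h, 0))"
      by (intro bounded_linear_compose[OF blinfun.bounded_linear_right])
         (auto intro: bounded_linear_Pair bounded_linear_ident bounded_linear_zero)
    then show ?thesis unfolding Gm_def using matrix_vector_mul(3) by metis
  qed
  have inK: "(x, t) \<in> K" if "x \<in> closure \<Omega>" "t \<in> {0..T}" for x t
    using that K_def by simp
  define L where "L = norm_C0W1inf \<Omega> T u"
  have gL: "norm (grad_u u x t) \<le> L" if x: "x \<in> \<Omega>" and t: "t \<in> {0..T}" for x t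
  proof -
    have xc: "x \<in> closure \<Omega>" using x closure_subset by blast
    have b1: "norm (u x' t') \<le> Mu" if "x' \<in> \<Omega>" "t' \<in> {0..T}" for x' t'
      using Mu[OF inK[OF _ that(2)]] that(1) closure_subset by (force simp: uu_def)
    have b2: "norm (grad_u u x' t') \<le> Mg" if "x' \<in> \<Omega>" "t' \<in> {0..T}" for x' t'
    proof -
      have "(x', t') \<in> K" using inK that closure_subset by blast
      then show ?thesis using Mg gradG KU' by auto
    qed
    define f where "f t' = max (SUP x\<in>\<Omega>. norm (u x t')) (SUP x\<in>\<Omega>. norm (grad_u u x t'))" for t'
    have bd1: "bdd_above ((\<lambda>x. norm (u x t')) ` \<Omega>)" if "t' \<in> {0..T}" for t'
      by (rule bdd_aboveI2[where M=Mu]) (use b1 that in auto)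
    have bd2: "bdd_above ((\<lambda>x. norm (grad_u u x t')) ` \<Omega>)" if "t' \<in> {0..T}" for t'
      by (rule bdd_aboveI2[where M=Mg]) (use b2 that in auto)
    have "f t' \<le> max Mu Mg" if "t' \<in> {0..T}" for t'
    proof -
      have a: "(SUP x\<in>\<Omega>. norm (u x t')) \<le> Mu" by (rule cSUP_least) (use dom(3) b1 that in auto)
      have b: "(SUP x\<in>\<Omega>. norm (grad_u u x t')) \<le> Mg" by (rule cSUP_least) (use dom(3) b2 that in auto)
      show ?thesis unfolding f_def using a b by (auto simp: max_def)
    qed
    then have bdf: "bdd_above (f ` {0..T})" by (rule bdd_aboveI2[where M="max Mu Mg"])
    have "norm (grad_u u x t) \<le> (SUP x\<in>\<Omega>. norm (grad_u u x t))"
      by (rule cSUP_upper[OF x bd2[OF t]])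
    also have "\<dots> \<le> f t" unfolding f_def by simp
    also have "\<dots> \<le> (SUP t\<in>{0..T}. f t)" by (rule cSUP_upper[OF t bdf])
    also have "\<dots> = L" unfolding L_def norm_C0W1inf_def f_def ..
    finally show ?thesis .
  qed
  have lipO: "norm (u x1 t - u x2 t) \<le> L * norm (x1 - x2)"
    if t: "t \<in> {0..T}" and x12: "x1 \<in> \<Omega>" "x2 \<in> \<Omega>" for t x1 x2
  proof (rule differentiable_bound[OF dom(2) _ _ x12])
    fix x assume x: "x \<in> \<Omega>"
    have xU: "(x, t) \<in> U" using inK[OF _ t] x closure_subset KU' by blast
    have "((\<lambda>x. (x, t)) has_derivative (\<lambda>h. (h, 0))) (at x within \<Omega>)"
      by (auto intro!: derivative_eq_intros)
    from has_derivative_compose[OF this uD[OF xU]]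
    show "((\<lambda>x. u x t) has_derivative (\<lambda>h. blinfun_apply (uD (x, t)) (h, 0))) (at x within \<Omega>)"
      by (simp add: uu_def)
    show "onorm (\<lambda>h. blinfun_apply (uD (x, t)) (h, 0)) \<le> L"
    proof (rule onorm_le)
      fix h
      have "norm (blinfun_apply (uD (x, t)) (h, 0)) = norm (Gm (x, t) *v h)" by (simp add: GmV)
      also have "\<dots> \<le> norm (Gm (x, t)) * norm h" by (rule norm_mat_vec_le)
      also have "\<dots> \<le> L * norm h"
        using gL[OF x t] gradG[OF xU] by (simp add: mult_right_mono)
      finally show "norm (blinfun_apply (uD (x, t)) (h, 0)) \<le> L * norm h" .
    qed
  qed
  have contut: "continuous_on (closure \<Omega>) (\<lambda>x. u x t)" if t: "t \<in> {0..T}" for t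
  proof -
    have "continuous_on (closure \<Omega>) (\<lambda>x. uu (x, t))"
      by (rule continuous_on_compose2[OF contu]) (use inK[OF _ t] KU' in \<open>auto intro!: continuous_intros\<close>)
    then show ?thesis by (simp add: uu_def)
  qed
  have lipC: "norm (u x1 t - u x2 t) \<le> L * norm (x1 - x2)"
    if t: "t \<in> {0..T}" and x12: "x1 \<in> closure \<Omega>" "x2 \<in> closure \<Omega>" for t x1 x2
  proof -
    define C where "C = closure \<Omega> \<times> closure \<Omega>"
    define g where "g p = L * norm (fst p - snd p) - norm (u (fst p) t - u (snd p) t)" for p
    have cg: "continuous_on C g" unfolding g_def C_def
      by (intro continuous_intros continuous_on_compose2[OF contut[OF t]]) auto
    have clA: "closed (C \<inter> g -` {0..})"
      by (rule continuous_closed_preimage[OF cg]) (auto simp: C_def closed_Times)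
    have "\<Omega> \<times> \<Omega> \<subseteq> C \<inter> g -` {0..}"
      using lipO[OF t] closure_subset by (force simp: C_def g_def)
    then have "closure (\<Omega> \<times> \<Omega>) \<subseteq> C \<inter> g -` {0..}" using clA closure_minimal by blast
    then have "(x1, x2) \<in> C \<inter> g -` {0..}" using x12 unfolding closure_Times by blast
    then show ?thesis by (simp add: g_def)
  qed
  have intP: "interior (closure \<Omega>) \<noteq> {}"
    using dom(1,3) interior_maximal[OF closure_subset dom(1)] by blast
  have inv: "x - c *\<^sub>R u x t \<in> closure \<Omega>"
    if t: "t \<in> {0..T}" and c: "0 \<le> c" "c * L < 1" and x: "x \<in> closure \<Omega>" for t c x
    using invariance[OF dom(4) intP _ contut[OF t] lipC[OF t] c x] tangential[OF _ _ _ _ t] by blast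
  have ids: "dt_tensor \<sigma> x t = blinfun_apply (sD (x, t)) (0, 1)"
     "conv_tensor u \<sigma> x t = blinfun_apply (sD (x, t)) (uu (x, t), 0)"
     "grad_u u x t = Gm (x, t)" "\<sigma> x t = ss (x, t)"
     if "(x, t) \<in> U" for x t
    using dt_eq[OF sD[OF that, unfolded ss_def]] conv_eq[OF sD[OF that, unfolded ss_def]] gradG[OF that]
    by (simp_all add: uu_def ss_def)
  define \<Phi> where "\<Phi> z = blinfun_apply (sD z) (0, 1) + blinfun_apply (sD z) (uu z, 0)
      - Gm z ** ss z - ss z ** transpose (Gm z) + (1 / Wi) *\<^sub>R (ss z - mat 1)" for z
  have cPhi: "continuous_on U \<Phi>"
  proof -
    have c1: "continuous_on U (\<lambda>z. blinfun_apply (sD z) (0, 1))"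
      by (intro blinfun.continuous_on[OF contsD] continuous_on_const)
    have c2: "continuous_on U (\<lambda>z. blinfun_apply (sD z) (uu z, 0))"
      by (intro blinfun.continuous_on[OF contsD] continuous_intros contu)
    have c3: "continuous_on U (\<lambda>z. Gm z ** ss z)" by (intro cont_mm contGm conts)
    have c4: "continuous_on U (\<lambda>z. ss z ** transpose (Gm z))" by (intro cont_mm cont_tr contGm conts)
    show ?thesis unfolding \<Phi>_def by (intro continuous_intros c1 c2 c3 c4 conts)
  qed
  have oldT: "dt_tensor \<sigma> x t + conv_tensor u \<sigma> x t
                   - grad_u u x t ** \<sigma> x t - \<sigma> x t ** transpose (grad_u u x t)
                   = - (1 / Wi) *\<^sub>R (\<sigma> x t - mat 1)"
    if x: "x \<in> \<Omega>" and t: "t \<in> {0<..T}" for x t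
  proof -
    have xtU: "(x, t) \<in> U" using inK[of x t] x t closure_subset[of \<Omega>] KU' by auto
    have "\<Phi> (x, t) = 0"
    proof (rule zero_closure[OF U cPhi _ _ xtU])
      show "\<Phi> z = 0" if z: "z \<in> \<Omega> \<times> {0<..<T}" for z
      proof -
        obtain x' t' where zz: "z = (x', t')" "x' \<in> \<Omega>" "t' \<in> {0<..<T}" using z by auto
        have zU: "(x', t') \<in> U" using inK[of x' t'] zz closure_subset[of \<Omega>] KU' by auto
        show ?thesis using oldroyd[OF zz(2,3)] unfolding zz(1) \<Phi>_def ids[OF zU]
          by (simp add: algebra_simps)
      qed
      show "(x, t) \<in> closure (\<Omega> \<times> {0<..<T})"
        using x t T closure_subset by (auto simp: closure_Times)
    qed
    then show ?thesis unfolding ids[OF xtU] \<Phi>_def by (simp add: algebra_simps)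
  qed
  define V where "V = Mu + 1"
  define B where "B = M2 * V^2"
  define C1 where "C1 = B * T + M1 * V"
  define C where "C = B + 2 * Mg * C1 + Mg * Ms * Mg"
  have V0: "V \<ge> 0" using Mu0 V_def by simp
  have B0: "B \<ge> 0" using M20 B_def by simp
  have C10: "C1 \<ge> 0" using B0 T M10 V0 C1_def by simp
  have core: "norm (\<sigma> x t - S) \<le> C * dt^2"
    if dt: "dt > 0" "dt \<le> t" "t \<le> T" "dt * L < 1" and x: "x \<in> \<Omega>"
       and S: "(1 / dt) *\<^sub>R (S - (mat 1 + dt *\<^sub>R grad_u u x t) ** \<sigma> (x - dt *\<^sub>R u x t) (t - dt)
                ** transpose (mat 1 + dt *\<^sub>R grad_u u x t)) = - (1 / Wi) *\<^sub>R (S - mat 1)"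
    for dt t x S
  proof -
    have xc: "x \<in> closure \<Omega>" using x closure_subset by blast
    have tT: "t \<in> {0..T}" "t \<in> {0<..T}" using dt by auto
    have xtK: "(x, t) \<in> K" by (rule inK[OF xc tT(1)])
    have xtU: "(x, t) \<in> U" using xtK KU' by blast
    define v where "v = (- u x t, - 1 :: real)"
    have pv: "(x, t) + s *\<^sub>R v = (x - s *\<^sub>R u x t, t - s)" for s
      by (simp add: v_def)
    have segK: "(x, t) + s *\<^sub>R v \<in> K" if s: "s \<in> {0..dt}" for s
    proof -
      have sL: "s * L < 1"
      proof (cases "L \<ge> 0")
        case True then have "s * L \<le> dt * L" using s by (auto intro: mult_right_mono)
        then show ?thesis using dt by linarith
      next
        case False then have "s * L \<le> 0" using s by (simp add: mult_nonneg_nonpos)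
        then show ?thesis by linarith
      qed
      have "x - s *\<^sub>R u x t \<in> closure \<Omega>" using inv[OF tT(1) _ sL xc] s by simp
      moreover have "t - s \<in> {0..T}" using s dt by auto
      ultimately show ?thesis using inK unfolding pv by blast
    qed
    have tay: "norm (ss ((x, t) + dt *\<^sub>R v) - ss (x, t) - dt *\<^sub>R blinfun_apply (sD (x, t)) v)
               \<le> M2 * (norm v)^2 * dt^2"
      by (rule taylor2[where U=U and f=ss and D=sD and DD=sDD and M=M2])
         (use segK KU' sD sDD M2 dt in auto)
    have nv: "norm v \<le> V"
    proof -
      have "norm v \<le> norm (- u x t) + norm (- 1 :: real)" unfolding v_def by (rule norm_Pair_le)
      also have "\<dots> \<le> Mu + 1" using Mu[OF xtK] by (simp add: uu_def)
      finally show ?thesis by (simp add: V_def)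
    qed
    have nv2: "(norm v)^2 \<le> V^2" by (rule power_mono[OF nv norm_ge_zero])
    define E where "E = \<sigma> (x - dt *\<^sub>R u x t) (t - dt)"
    define \<sigma>0 where "\<sigma>0 = \<sigma> x t"
    define G where "G = grad_u u x t"
    define D0 where "D0 = blinfun_apply (sD (x, t)) v"
    define R where "R = E - \<sigma>0 - dt *\<^sub>R D0"
    have nR: "norm R \<le> B * dt^2"
    proof -
      have "norm R \<le> M2 * (norm v)^2 * dt^2"
        using tay unfolding R_def E_def \<sigma>0_def D0_def pv by (simp add: ss_def)
      also have "\<dots> \<le> M2 * V^2 * dt^2"
        using nv2 M20 by (intro mult_right_mono mult_left_mono) auto
      finally show ?thesis by (simp add: B_def)
    qed
    have D0eq: "D0 = (1 / Wi) *\<^sub>R (\<sigma>0 - mat 1) - G ** \<sigma>0 - \<sigma>0 ** transpose G"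
    proof -
      have veq: "v = - ((uu (x, t), 0) + (0, 1))" by (simp add: v_def uu_def)
      have "D0 = - (blinfun_apply (sD (x, t)) (uu (x, t), 0) + blinfun_apply (sD (x, t)) (0, 1))"
        unfolding D0_def veq by (simp only: blinfun.minus_right blinfun.add_right)
      also have "\<dots> = - (dt_tensor \<sigma> x t + conv_tensor u \<sigma> x t)" using ids[OF xtU] by (simp add: add.commute)
      also have "dt_tensor \<sigma> x t + conv_tensor u \<sigma> x t = - (1 / Wi) *\<^sub>R (\<sigma> x t - mat 1)
          + \<sigma> x t ** transpose (grad_u u x t) + grad_u u x t ** \<sigma> x t"
        using oldT[OF x tT(2)] by (simp only: diff_eq_eq)
      finally show ?thesis unfolding \<sigma>0_def G_def
        by (simp add: algebra_simps)
    qed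
    have nD0: "norm D0 \<le> M1 * V"
    proof -
      have "norm D0 \<le> norm (sD (x, t)) * norm v" unfolding D0_def by (rule norm_blinfun)
      also have "\<dots> \<le> M1 * V" using M1[OF xtK] nv M10 by (intro mult_mono) auto
      finally show ?thesis .
    qed
    have nG: "norm G \<le> Mg" using Mg[OF xtK] ids[OF xtU] by (simp add: G_def)
    have nE: "norm E \<le> Ms"
    proof -
      have "(x - dt *\<^sub>R u x t, t - dt) \<in> K" using segK[of dt] dt unfolding pv by simp
      then show ?thesis using Ms by (force simp: E_def ss_def)
    qed
    have nR': "norm (E - \<sigma>0) \<le> dt * C1"
    proof -
      have "E - \<sigma>0 = R + dt *\<^sub>R D0" by (simp add: R_def)
      then have "norm (E - \<sigma>0) \<le> norm R + dt * norm D0" using dt by (simp add: norm_triangle_le)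
      also have "\<dots> \<le> B * dt^2 + dt * (M1 * V)" using nR nD0 dt by (intro add_mono mult_left_mono) auto
      also have "\<dots> \<le> B * (T * dt) + dt * (M1 * V)"
        using dt B0 M10 V0 by (intro add_mono mult_left_mono) (auto simp: power2_eq_square intro: mult_right_mono)
      also have "\<dots> = dt * C1" by (simp add: C1_def algebra_simps)
      finally show ?thesis .
    qed
    define Q where "Q = R + dt *\<^sub>R (G ** (E - \<sigma>0) + (E - \<sigma>0) ** transpose G) + (dt * dt) *\<^sub>R (G ** E ** transpose G)"
    have FQ: "(mat 1 + dt *\<^sub>R G) ** E ** transpose (mat 1 + dt *\<^sub>R G) = \<sigma>0 + (dt / Wi) *\<^sub>R (\<sigma>0 - mat 1) + Q"
      unfolding FEF Q_def R_def D0eq mm_diff_l mm_diff_r by (simp add: algebra_simps)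
    have nQ: "norm Q \<le> C * dt^2"
    proof -
      have a: "norm (G ** (E - \<sigma>0)) \<le> Mg * (dt * C1)"
        using norm_mat_mult_le[of G "E - \<sigma>0"] nG nR' Mg0 by (meson mult_mono norm_ge_zero order_trans)
      have b: "norm ((E - \<sigma>0) ** transpose G) \<le> (dt * C1) * Mg"
        using norm_mat_mult_le[of "E - \<sigma>0" "transpose G"] nG nR' Mg0 dt C10
        by (simp add: norm_transpose) (meson mult_mono norm_ge_zero order_trans mult_nonneg_nonneg less_imp_le)
      have c: "norm (G ** E ** transpose G) \<le> Mg * Ms * Mg"
      proof -
        have "norm (G ** E ** transpose G) \<le> norm (G ** E) * norm G"
          using norm_mat_mult_le[of "G ** E" "transpose G"] by (simp add: norm_transpose)
        also have "\<dots> \<le> (norm G * norm E) * norm G"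
          by (intro mult_right_mono norm_mat_mult_le) simp
        also have "\<dots> \<le> (Mg * Ms) * Mg"
          using nG nE Mg0 Ms0 by (intro mult_mono) auto
        finally show ?thesis .
      qed
      have "norm Q \<le> norm R + norm (dt *\<^sub>R (G ** (E - \<sigma>0) + (E - \<sigma>0) ** transpose G))
                      + norm ((dt * dt) *\<^sub>R (G ** E ** transpose G))"
        unfolding Q_def by (meson norm_triangle_le norm_triangle_ineq add_mono order_refl)
      also have "\<dots> \<le> norm R + dt * (norm (G ** (E - \<sigma>0)) + norm ((E - \<sigma>0) ** transpose G))
                      + (dt * dt) * norm (G ** E ** transpose G)"
        using dt by (auto intro!: add_mono mult_left_mono norm_triangle_ineq)
      also have "\<dots> \<le> B * dt^2 + dt * (Mg * (dt * C1) + (dt * C1) * Mg) + (dt * dt) * (Mg * Ms * Mg)"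
        using nR a b c dt by (intro add_mono mult_left_mono) auto
      also have "\<dots> = C * dt^2" by (simp add: C_def power2_eq_square algebra_simps)
      finally show ?thesis .
    qed
    have S1: "S - (\<sigma>0 + (dt / Wi) *\<^sub>R (\<sigma>0 - mat 1) + Q) = - (dt / Wi) *\<^sub>R (S - mat 1)"
    proof -
      have "dt *\<^sub>R ((1 / dt) *\<^sub>R (S - (\<sigma>0 + (dt / Wi) *\<^sub>R (\<sigma>0 - mat 1) + Q)))
            = dt *\<^sub>R (- (1 / Wi) *\<^sub>R (S - mat 1))"
        using S unfolding FQ[unfolded G_def E_def] by simp
      then show ?thesis using dt by simp
    qed
    have "Q = (1 + dt / Wi) *\<^sub>R (S - \<sigma>0)"
    proof -
      have "Q = S - (\<sigma>0 + (dt / Wi) *\<^sub>R (\<sigma>0 - mat 1)) + (dt / Wi) *\<^sub>R (S - mat 1)"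
        using S1 by (simp add: algebra_simps)
      then show ?thesis by (simp add: algebra_simps)
    qed
    moreover have pos: "1 + dt / Wi > 0" using dt Wi by (simp add: add_pos_pos)
    ultimately have "norm (\<sigma>0 - S) = norm Q / (1 + dt / Wi)"
      by (simp add: norm_minus_commute)
    also have "\<dots> \<le> norm Q"
    proof -
      have "0 \<le> dt / Wi" using dt Wi by simp
      then have "norm Q * 1 \<le> norm Q * (1 + dt / Wi)" by (intro mult_left_mono) auto
      then have "norm Q \<le> norm Q * (1 + dt / Wi)" by simp
      then show ?thesis using pos by (simp add: divide_le_eq)
    qed
    finally show ?thesis using nQ \<sigma>0_def by simp
  qed
  have fin: "norm (\<sigma> x (real n * (T / real N)) - S) \<le> C * (T / real N)^2"
    if H1: "N > 0" and H2: "T / real N * norm_C0W1inf \<Omega> T u < 1" and H3: "1 \<le> n" "n \<le> N"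
      and H5: "x \<in> \<Omega>"
      and H6: "(1 / (T / real N)) *\<^sub>R (S - (mat 1 + (T / real N) *\<^sub>R grad_u u x (real n * (T / real N)))
                 ** \<sigma> (x - (T / real N) *\<^sub>R u x (real n * (T / real N))) (real n * (T / real N) - T / real N)
                 ** transpose (mat 1 + (T / real N) *\<^sub>R grad_u u x (real n * (T / real N))))
               = - (1 / Wi) *\<^sub>R (S - mat 1)"
    for N n x S
  proof (rule core[OF _ _ _ _ H5 H6])
    show "0 < T / real N" using H1 T by simp
    have "1 * (T / real N) \<le> real n * (T / real N)"
      using H3 H1 T by (intro mult_right_mono) auto
    then show "T / real N \<le> real n * (T / real N)" by simp
    have "real n * (T / real N) \<le> real N * (T / real N)"
      using H3 H1 T by (intro mult_right_mono) auto
    then show "real n * (T / real N) \<le> T" using H1 by simp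
    show "T / real N * L < 1" using H2 L_def by simp
  qed
  show ?thesis unfolding Let_def
    by (intro exI[of _ C] allI impI) (use fin in blast)
qed

end
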